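(* Let $n\ge2$ and let $G$ be an induced subgraph of $Q_n$ with exactly $2^{n-1}$ vertices such that for every direction $i\in[n]$, $G$ contains an edge in direction $i$. Then $\Delta(G)>\tfrac12\log_2 n-\tfrac12\log_2\log_2 n+\tfrac12$.
   Context: $Q_n$ is the $n$-dimensional hypercube graph on $\{0,1\}^n$; an edge $\{x,y\}$ of $Q_n$ is in direction $i$ if $x$ and $y$ differ exactly in coordinate $i$. $\Delta(G)$ is the maximum degree of $G$. *)

theory Defs
  imports Complex_Main
begin

text \<open>Vertices of Q_n: the cube {0,1}^n, encoded as 0/1-vectors indexed by {0..<n}
  (functions nat => bool that are False outside {0..<n}).\<close>
definition cube_vertices :: "nat \<Rightarrow> (nat \<Rightarrow> bool) set" where
  "cube_vertices n = {x. \<forall>i. i \<ge> n \<longrightarrow> \<not> x i}"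

definition cube_edge_dir :: "nat \<Rightarrow> (nat \<Rightarrow> bool) \<Rightarrow> (nat \<Rightarrow> bool) \<Rightarrow> nat \<Rightarrow> bool" where
  "cube_edge_dir n x y i \<longleftrightarrow> x \<in> cube_vertices n \<and> y \<in> cube_vertices n \<and> i < n \<and>
     x i \<noteq> y i \<and> (\<forall>j. j \<noteq> i \<longrightarrow> x j = y j)"

definition cube_edge :: "nat \<Rightarrow> (nat \<Rightarrow> bool) \<Rightarrow> (nat \<Rightarrow> bool) \<Rightarrow> bool" where
  "cube_edge n x y \<longleftrightarrow> (\<exists>i. cube_edge_dir n x y i)"

definition induced_degree :: "nat \<Rightarrow> (nat \<Rightarrow> bool) set \<Rightarrow> (nat \<Rightarrow> bool) \<Rightarrow> nat" where
  "induced_degree n S v = card {w \<in> S. cube_edge n v w}"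

definition induced_max_degree :: "nat \<Rightarrow> (nat \<Rightarrow> bool) set \<Rightarrow> nat" where
  "induced_max_degree n S = Max (induced_degree n S ` S)"

end

theory Submission
  imports Defs "HOL-Analysis.Convex"
begin

lemma log2_1plus: fixes x :: real assumes "0 \<le> x" "x \<le> 1" shows "x \<le> log 2 (1 + x)"
proof -
  have "exp ((1 - x) *\<^sub>R 0 + x *\<^sub>R ln 2) \<le> (1 - x) * exp 0 + x * exp (ln 2)"
    using assms by (intro convex_onD[OF exp_convex]) auto
  hence "exp (x * ln 2) \<le> 1 + x" by simp
  hence "ln (exp (x * ln 2)) \<le> ln (1 + x)" using assms by (subst ln_le_cancel_iff) auto
  hence "x * ln 2 \<le> ln (1 + x)" by simp
  thus ?thesis by (simp add: log_def field_simps)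
qed

lemma xlog_ineq:
  fixes a b m :: nat
  assumes "m \<le> a" "m \<le> b"
  shows "real a * log 2 a + real b * log 2 b + 2 * real m \<le> real (a + b) * log 2 (real (a + b))"
proof -
  have main: "real a * log 2 a + real b * log 2 b + 2 * real a \<le> real (a + b) * log 2 (real (a + b))"
    if ab: "1 \<le> a" "a \<le> b" for a b :: nat
  proof -
    have A: "real a \<le> real a * log 2 ((a + b) / a)"
    proof -
      have "log 2 2 \<le> log 2 ((a + b) / a)" using ab by (subst log_le_cancel_iff) (auto simp: field_simps)
      thus ?thesis using ab by (simp add: mult_left_mono)
    qed
    have B: "real a \<le> real b * log 2 (1 + a / b)"
    proof -
      have "a / b \<le> log 2 (1 + a / b)" using ab by (intro log2_1plus) auto
      hence "b * (a / b) \<le> b * log 2 (1 + a / b)" by (intro mult_left_mono) auto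
      thus ?thesis using ab by (simp add: mult.commute)
    qed
    have e1: "log 2 ((a + b) / a) = log 2 (a + b) - log 2 a" using ab by (simp add: log_divide)
    have e2: "1 + a / b = (a + b) / (b::real)" using ab by (simp add: field_simps)
    have e3: "log 2 ((a + b) / b) = log 2 (a + b) - log 2 b" using ab by (simp add: log_divide)
    have f1: "real a * log 2 (a + b) = a * log 2 a + a * log 2 ((a + b) / a)"
      unfolding e1 by (simp add: algebra_simps)
    have f2: "real b * log 2 (a + b) = b * log 2 b + b * log 2 (1 + a / b)"
      unfolding e2 e3 by (simp add: algebra_simps)
    have "real (a + b) * log 2 (real (a + b)) = a * log 2 (a + b) + b * log 2 (a + b)"
      by (simp add: algebra_simps)
    thus ?thesis using A B f1 f2 by linarith
  qed
  show ?thesis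
  proof (cases "a = 0 \<or> b = 0")
    case True thus ?thesis using assms by auto
  next
    case False
    show ?thesis
    proof (cases "a \<le> b")
      case True thus ?thesis using main[of a b] False assms by simp
    next
      case F: False thus ?thesis using main[of b a] False assms by (simp add: add.commute)
    qed
  qed
qed

definition flip :: "nat \<Rightarrow> (nat \<Rightarrow> bool) \<Rightarrow> (nat \<Rightarrow> bool)" where
  "flip i x = x(i := \<not> x i)"

lemma flip_same[simp]: "flip i x i = (\<not> x i)" by (simp add: flip_def)
lemma flip_other[simp]: "j \<noteq> i \<Longrightarrow> flip i x j = x j" by (simp add: flip_def)
lemma flip_flip[simp]: "flip i (flip i x) = x" by (auto simp: flip_def)
lemma flip_comm: "flip i (flip j x) = flip j (flip i x)" by (auto simp: flip_def fun_eq_iff)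
lemma flip_neq[simp]: "flip i x \<noteq> x" by (metis flip_same)
lemma flip_inj: "flip i x = flip j x \<longleftrightarrow> i = j"
  by (metis flip_other flip_same)

definition Nb :: "(nat \<Rightarrow> bool) set \<Rightarrow> (nat \<Rightarrow> bool) \<Rightarrow> (nat \<Rightarrow> bool) set" where
  "Nb W x = {y \<in> W. \<exists>i. y = flip i x}"

definition Dsum :: "(nat \<Rightarrow> bool) set \<Rightarrow> nat" where
  "Dsum W = (\<Sum>x\<in>W. card (Nb W x))"

lemma card_sub_flip: "finite W \<Longrightarrow> finite W' \<Longrightarrow> card (Nb W x) \<le> card (Nb W' x) + card (W \<inter> {flip n x})"
  if "\<And>y. y \<in> W \<Longrightarrow> y n = x n \<Longrightarrow> y \<in> W'" for W W' :: "(nat \<Rightarrow> bool) set"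
proof -
  assume fin: "finite W" and fin': "finite W'"
  have "Nb W x \<subseteq> (Nb W' x \<inter> W) \<union> (W \<inter> {flip n x})"
  proof
    fix y assume y: "y \<in> Nb W x"
    then obtain i where yi: "y = flip i x" "y \<in> W" by (auto simp: Nb_def)
    show "y \<in> (Nb W' x \<inter> W) \<union> (W \<inter> {flip n x})"
    proof (cases "i = n")
      case True thus ?thesis using yi by auto
    next
      case False
      hence "y n = x n" using yi by simp
      thus ?thesis using yi that by (auto simp: Nb_def)
    qed
  qed
  hence "card (Nb W x) \<le> card ((Nb W' x \<inter> W) \<union> (W \<inter> {flip n x}))"
    using fin by (intro card_mono) auto
  also have "\<dots> \<le> card (Nb W' x \<inter> W) + card (W \<inter> {flip n x})" by (rule card_Un_le)
  also have "card (Nb W' x \<inter> W) \<le> card (Nb W' x)"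
    using fin' by (intro card_mono) (auto simp: Nb_def)
  finally show ?thesis by simp
qed

lemma Dsum_base: "W \<subseteq> {x. \<forall>i. x i = c i} \<Longrightarrow> Dsum W = 0"
proof -
  assume W: "W \<subseteq> {x. \<forall>i. x i = c i}"
  have "\<And>x. x \<in> W \<Longrightarrow> Nb W x = {}"
  proof -
    fix x assume x: "x \<in> W"
    { fix y i assume "y \<in> W" "y = flip i x"
      have "y = c" using subsetD[OF W \<open>y \<in> W\<close>] by (auto simp: fun_eq_iff)
      moreover have "x = c" using subsetD[OF W x] by (auto simp: fun_eq_iff)
      ultimately have "y = x" by simp
      hence False using \<open>y = flip i x\<close> by simp }
    thus "Nb W x = {}" by (auto simp: Nb_def)
  qed
  thus ?thesis by (simp add: Dsum_def)
qed

lemma iso: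
  "finite W \<Longrightarrow> W \<subseteq> {x. \<forall>i\<ge>n. x i = c i} \<Longrightarrow>
     real (Dsum W) \<le> real (card W) * log 2 (real (card W))"
proof (induction n arbitrary: c W)
  case 0
  hence "Dsum W = 0" by (intro Dsum_base[of W c]) auto
  moreover have "0 \<le> real (card W) * log 2 (real (card W))"
    by (cases "card W = 0") auto
  ultimately show ?case by simp
next
  case (Suc n)
  define W0 where "W0 = {x\<in>W. x n = c n}"
  define W1 where "W1 = {x\<in>W. x n \<noteq> c n}"
  have fin0: "finite W0" "finite W1" using Suc.prems by (auto simp: W0_def W1_def)
  have s0: "W0 \<subseteq> {x. \<forall>i\<ge>n. x i = c i}"
  proof (intro subsetI CollectI allI impI)
    fix x i assume x: "x \<in> W0" and i: "n \<le> i"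
    show "x i = c i"
    proof (cases "i = n")
      case True thus ?thesis using x by (simp add: W0_def)
    next
      case False hence "Suc n \<le> i" using i by simp
      thus ?thesis using x Suc.prems(2) by (auto simp: W0_def)
    qed
  qed
  have s1: "W1 \<subseteq> {x. \<forall>i\<ge>n. x i = (c(n := \<not> c n)) i}"
  proof (intro subsetI CollectI allI impI)
    fix x i assume x: "x \<in> W1" and i: "n \<le> i"
    show "x i = (c(n := \<not> c n)) i"
    proof (cases "i = n")
      case True thus ?thesis using x by (auto simp: W1_def)
    next
      case False hence "Suc n \<le> i" using i by simp
      thus ?thesis using x Suc.prems(2) False by (auto simp: W1_def)
    qed
  qed
  have IH0: "real (Dsum W0) \<le> real (card W0) * log 2 (real (card W0))"
    using Suc.IH[OF fin0(1) s0] .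
  have IH1: "real (Dsum W1) \<le> real (card W1) * log 2 (real (card W1))"
    using Suc.IH[OF fin0(2) s1] .
  have Wu: "W = W0 \<union> W1" "W0 \<inter> W1 = {}" by (auto simp: W0_def W1_def)
  define c0 where "c0 = card {x\<in>W0. flip n x \<in> W}"
  define c1 where "c1 = card {x\<in>W1. flip n x \<in> W}"
  have eqc: "(\<Sum>x\<in>V. card (W \<inter> {flip n x})) = card {x\<in>V. flip n x \<in> W}" if "finite V" for V
  proof -
    have "(\<Sum>x\<in>V. card (W \<inter> {flip n x})) = (\<Sum>x\<in>V. if flip n x \<in> W then 1 else 0)"
      by (intro sum.cong) auto
    also have "\<dots> = card {x\<in>V. flip n x \<in> W}"
      using that by (simp add: sum.If_cases Int_def)
    finally show ?thesis .
  qed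
  have D0: "(\<Sum>x\<in>W0. card (Nb W x)) \<le> Dsum W0 + c0"
  proof -
    have "(\<Sum>x\<in>W0. card (Nb W x)) \<le> (\<Sum>x\<in>W0. card (Nb W0 x) + card (W \<inter> {flip n x}))"
      by (intro sum_mono card_sub_flip) (use Suc.prems fin0 in \<open>auto simp: W0_def\<close>)
    also have "\<dots> = Dsum W0 + c0" using fin0 by (simp add: sum.distrib Dsum_def eqc c0_def)
    finally show ?thesis .
  qed
  have D1: "(\<Sum>x\<in>W1. card (Nb W x)) \<le> Dsum W1 + c1"
  proof -
    have "(\<Sum>x\<in>W1. card (Nb W x)) \<le> (\<Sum>x\<in>W1. card (Nb W1 x) + card (W \<inter> {flip n x}))"
      by (intro sum_mono card_sub_flip) (use Suc.prems fin0 in \<open>auto simp: W1_def\<close>)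
    also have "\<dots> = Dsum W1 + c1" using fin0 by (simp add: sum.distrib Dsum_def eqc c1_def)
    finally show ?thesis .
  qed
  have "Dsum W = (\<Sum>x\<in>W0. card (Nb W x)) + (\<Sum>x\<in>W1. card (Nb W x))"
    unfolding Dsum_def using Wu fin0 by (simp add: sum.union_disjoint)
  hence DW: "Dsum W \<le> Dsum W0 + Dsum W1 + c0 + c1" using D0 D1 by linarith
  have c0a: "c0 \<le> card W0" unfolding c0_def using fin0 by (intro card_mono) auto
  have c1a: "c1 \<le> card W1" unfolding c1_def using fin0 by (intro card_mono) auto
  have c0b: "c0 \<le> card W1" unfolding c0_def
  proof (rule card_inj_on_le[where f="flip n"])
    show "inj_on (flip n) {x \<in> W0. flip n x \<in> W}" by (metis flip_flip inj_onI)
    show "flip n ` {x \<in> W0. flip n x \<in> W} \<subseteq> W1" by (auto simp: W0_def W1_def)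
    show "finite W1" by (rule fin0)
  qed
  have c1b: "c1 \<le> card W0" unfolding c1_def
  proof (rule card_inj_on_le[where f="flip n"])
    show "inj_on (flip n) {x \<in> W1. flip n x \<in> W}" by (metis flip_flip inj_onI)
    show "flip n ` {x \<in> W1. flip n x \<in> W} \<subseteq> W0" by (auto simp: W0_def W1_def)
    show "finite W0" by (rule fin0)
  qed
  define m where "m = min (card W0) (card W1)"
  have "c0 + c1 \<le> 2 * m" using c0a c1a c0b c1b by (simp add: m_def)
  have cW: "card W = card W0 + card W1" using Wu fin0 by (simp add: card_Un_disjoint)
  have X: "real (card W0) * log 2 (card W0) + real (card W1) * log 2 (card W1) + 2 * real m
      \<le> real (card W0 + card W1) * log 2 (real (card W0 + card W1))"
    by (rule xlog_ineq) (auto simp: m_def)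
  have "real (Dsum W) \<le> real (Dsum W0) + real (Dsum W1) + 2 * real m"
    using DW \<open>c0 + c1 \<le> 2 * m\<close> by linarith
  thus ?case using X IH0 IH1 cW by simp
qed

lemma card_funs: "finite F \<Longrightarrow> finite {x::nat\<Rightarrow>bool. \<forall>j. j \<notin> F \<longrightarrow> \<not> x j}
   \<and> card {x::nat\<Rightarrow>bool. \<forall>j. j \<notin> F \<longrightarrow> \<not> x j} = 2 ^ card F"
proof -
  assume F: "finite F"
  have b: "bij_betw (\<lambda>x. {j. x j}) {x::nat\<Rightarrow>bool. \<forall>j. j \<notin> F \<longrightarrow> \<not> x j} (Pow F)"
  proof (rule bij_betwI')
    fix x y :: "nat \<Rightarrow> bool"
    show "({j. x j} = {j. y j}) = (x = y)" by (auto simp: fun_eq_iff)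
  next
    fix x :: "nat \<Rightarrow> bool" assume "x \<in> {x. \<forall>j. j \<notin> F \<longrightarrow> \<not> x j}"
    thus "{j. x j} \<in> Pow F" by auto
  next
    fix B assume "B \<in> Pow F"
    thus "\<exists>x\<in>{x. \<forall>j. j \<notin> F \<longrightarrow> \<not> x j}. B = {j. x j}"
      by (intro bexI[of _ "\<lambda>j. j \<in> B"]) auto
  qed
  show ?thesis using bij_betw_finite[OF b] bij_betw_same_card[OF b] F by (simp add: card_Pow)
qed

lemma cube_eq: "cube_vertices n = {x. \<forall>j. j \<notin> {0..<n} \<longrightarrow> \<not> x j}"
  by (auto simp: cube_vertices_def)

lemma finite_cube: "finite (cube_vertices n)"
  using card_funs[of "{0..<n}"] cube_eq by simp

lemma card_half: "i < n \<Longrightarrow> card {x \<in> cube_vertices n. \<not> x i} = 2 ^ (n - 1)"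
proof -
  assume i: "i < n"
  have e: "{x \<in> cube_vertices n. \<not> x i} = {x. \<forall>j. j \<notin> {0..<n} - {i} \<longrightarrow> \<not> x j}"
    by (auto simp: cube_vertices_def)
  have "card ({0..<n} - {i}) = n - 1" using i by simp
  thus ?thesis using card_funs[of "{0..<n} - {i}"] e by simp
qed

lemma flip_cube: "x \<in> cube_vertices n \<Longrightarrow> i < n \<Longrightarrow> flip i x \<in> cube_vertices n"
  by (auto simp: cube_vertices_def flip_def)

lemma edge_dir_iff: "cube_edge_dir n x y i \<longleftrightarrow>
   x \<in> cube_vertices n \<and> y \<in> cube_vertices n \<and> i < n \<and> y = flip i x"
  unfolding cube_edge_dir_def
  by (auto simp: flip_def fun_eq_iff)

lemma deg_eq:
  assumes "S \<subseteq> cube_vertices n" "x \<in> cube_vertices n"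
  shows "induced_degree n S x = card {j. j < n \<and> flip j x \<in> S}"
proof -
  have "{w \<in> S. cube_edge n x w} = (\<lambda>j. flip j x) ` {j. j < n \<and> flip j x \<in> S}"
    using assms by (auto simp: cube_edge_def edge_dir_iff)
  moreover have "inj_on (\<lambda>j. flip j x) {j. j < n \<and> flip j x \<in> S}"
    by (auto intro!: inj_onI simp: flip_inj)
  ultimately show ?thesis by (simp add: induced_degree_def card_image)
qed

lemma ab_eq:
  assumes S: "S \<subseteq> cube_vertices n" "card S = 2 ^ (n - 1)" and i: "i < n"
  shows "card {x \<in> cube_vertices n. \<not> x i \<and> x \<notin> S \<and> flip i x \<notin> S}
       = card {x\<in>S. \<not> x i \<and> flip i x \<in> S}"
proof -
  define L where "L = {x \<in> cube_vertices n. \<not> x i}"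
  define P where "P = {x\<in>L. x \<in> S}"
  define Q where "Q = {x\<in>L. flip i x \<in> S}"
  have finL: "finite L" using finite_cube by (simp add: L_def)
  have finS: "finite S" using finite_cube S(1) finite_subset by blast
  have cL: "card L = 2 ^ (n - 1)" using card_half[OF i] by (simp add: L_def)
  have PQ: "P \<subseteq> L" "Q \<subseteq> L" by (auto simp: P_def Q_def)
  have finPQ: "finite P" "finite Q" using PQ finL finite_subset by blast+
  have Sdec: "S = P \<union> {x\<in>S. x i}" "P \<inter> {x\<in>S. x i} = {}"
    using S(1) by (auto simp: P_def L_def)
  have cS: "card S = card P + card {x\<in>S. x i}"
    using Sdec finPQ finS by (metis (no_types, lifting) card_Un_disjoint finite_Un)
  have imgQ: "flip i ` Q = {x\<in>S. x i}"
  proof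
    show "flip i ` Q \<subseteq> {x\<in>S. x i}" by (auto simp: Q_def L_def)
    show "{x\<in>S. x i} \<subseteq> flip i ` Q"
    proof
      fix x assume x: "x \<in> {x\<in>S. x i}"
      hence "flip i x \<in> Q" using S(1) i by (auto simp: Q_def L_def flip_cube)
      thus "x \<in> flip i ` Q" by (metis flip_flip image_eqI)
    qed
  qed
  have cQ: "card Q = card {x\<in>S. x i}"
    using imgQ card_image[of "flip i" Q] by (metis flip_flip inj_onI)
  have A: "{x\<in>S. \<not> x i \<and> flip i x \<in> S} = P \<inter> Q" using S(1) by (auto simp: P_def Q_def L_def)
  have B: "{x \<in> cube_vertices n. \<not> x i \<and> x \<notin> S \<and> flip i x \<notin> S} = L - (P \<union> Q)"
    by (auto simp: P_def Q_def L_def)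
  have "card (P \<union> Q) + card (P \<inter> Q) = card P + card Q" using finPQ by (rule card_Un_Int[symmetric])
  moreover have "card (L - (P \<union> Q)) = card L - card (P \<union> Q)"
    using PQ finL by (intro card_Diff_subset) (auto intro: finite_subset)
  moreover have "card (P \<union> Q) \<le> card L" using PQ finL by (intro card_mono) auto
  ultimately show ?thesis unfolding A B using cS cQ cL S(2) by linarith
qed

lemma dir_bound:
  assumes S: "S \<subseteq> cube_vertices n" "card S = 2 ^ (n - 1)" and i: "i < n"
    and degb: "\<forall>x\<in>S. induced_degree n S x \<le> d"
    and ne: "{x\<in>S. \<not> x i \<and> flip i x \<in> S} \<noteq> {}"
  shows "real n - 2 * real d \<le> log 2 (card {x\<in>S. \<not> x i \<and> flip i x \<in> S})"
proof -
  define A where "A = {x\<in>S. \<not> x i \<and> flip i x \<in> S}"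
  define B where "B = {x \<in> cube_vertices n. \<not> x i \<and> x \<notin> S \<and> flip i x \<notin> S}"
  have finS: "finite S" using finite_cube S(1) finite_subset by blast
  have finA: "finite A" using finS by (simp add: A_def)
  have finB: "finite B" using finite_cube by (simp add: B_def)
  have cAB: "card B = card A" unfolding A_def B_def by (rule ab_eq[OF S i])
  have a1: "card A \<ge> 1" using ne finA by (simp add: A_def Suc_le_eq card_gt_0_iff)
  define W where "W = A \<union> B"
  have disj: "A \<inter> B = {}" by (auto simp: A_def B_def)
  have finW: "finite W" using finA finB by (simp add: W_def)
  have cW: "card W = 2 * card A" using disj finA finB cAB by (simp add: W_def card_Un_disjoint)
  have nbA: "real (card (Nb B x)) \<ge> real n + 1 - 2 * real d" if x: "x \<in> A" for x
  proof -
    have xS: "x \<in> S" "flip i x \<in> S" "\<not> x i" using x by (auto simp: A_def)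
    have xc: "x \<in> cube_vertices n" "flip i x \<in> cube_vertices n" using xS S(1) by auto
    define K1 where "K1 = {j. j < n \<and> j \<noteq> i \<and> flip j x \<in> S}"
    define K2 where "K2 = {j. j < n \<and> j \<noteq> i \<and> flip j (flip i x) \<in> S}"
    define J where "J = {j. j < n \<and> j \<noteq> i \<and> flip j x \<notin> S \<and> flip j (flip i x) \<notin> S}"
    have d1: "card {j. j < n \<and> flip j x \<in> S} \<le> d"
      using degb xS deg_eq[OF S(1) xc(1)] by metis
    have d2: "card {j. j < n \<and> flip j (flip i x) \<in> S} \<le> d"
      using degb xS deg_eq[OF S(1) xc(2)] by metis
    have "{j. j < n \<and> flip j x \<in> S} = insert i K1" using xS i by (auto simp: K1_def)
    hence k1: "card K1 + 1 \<le> d" using d1 by (simp add: K1_def)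
    have "{j. j < n \<and> flip j (flip i x) \<in> S} = insert i K2" using xS i by (auto simp: K2_def)
    hence k2: "card K2 + 1 \<le> d" using d2 by (simp add: K2_def)
    have "{j. j < n \<and> j \<noteq> i} \<subseteq> J \<union> K1 \<union> K2" by (auto simp: J_def K1_def K2_def)
    hence "card {j. j < n \<and> j \<noteq> i} \<le> card (J \<union> K1 \<union> K2)"
      by (intro card_mono) (auto simp: J_def K1_def K2_def)
    also have "\<dots> \<le> card J + card K1 + card K2"
      by (metis (no_types, lifting) add_le_mono1 card_Un_le le_trans)
    finally have cJ0: "card {j. j < n \<and> j \<noteq> i} \<le> card J + card K1 + card K2" .
    have "{j. j < n \<and> j \<noteq> i} = {0..<n} - {i}" by auto
    hence "card {j. j < n \<and> j \<noteq> i} = n - 1" using i by simp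
    hence cJ: "real n + 1 - 2 * real d \<le> real (card J)" using cJ0 k1 k2 i by linarith
    have "(\<lambda>j. flip j x) ` J \<subseteq> Nb B x"
    proof
      fix y assume "y \<in> (\<lambda>j. flip j x) ` J"
      then obtain j where j: "j \<in> J" "y = flip j x" by auto
      have "y \<in> B" using j xS xc by (auto simp: B_def J_def flip_cube flip_comm)
      thus "y \<in> Nb B x" using j by (auto simp: Nb_def)
    qed
    hence "card ((\<lambda>j. flip j x) ` J) \<le> card (Nb B x)"
      using finB by (intro card_mono) (auto simp: Nb_def)
    moreover have "card ((\<lambda>j. flip j x) ` J) = card J"
      by (intro card_image) (auto intro!: inj_onI simp: flip_inj)
    ultimately show ?thesis using cJ by linarith
  qed
  have swap: "(\<Sum>x\<in>B. card (Nb A x)) = (\<Sum>y\<in>A. card (Nb B y))"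
  proof -
    have cnt: "card (Nb V x) = (\<Sum>y\<in>V. if \<exists>k. y = flip k x then 1 else 0)" if "finite V" for V x
      using that by (simp add: sum.If_cases Nb_def Int_def)
    have sym: "(\<exists>k. y = flip k x) = (\<exists>k. x = flip k y)" for x y by (metis flip_flip)
    have "(\<Sum>x\<in>B. card (Nb A x)) = (\<Sum>x\<in>B. \<Sum>y\<in>A. if \<exists>k. y = flip k x then 1 else 0)"
      using finA cnt by simp
    also have "\<dots> = (\<Sum>y\<in>A. \<Sum>x\<in>B. if \<exists>k. y = flip k x then 1 else 0)" by (rule sum.swap)
    also have "\<dots> = (\<Sum>y\<in>A. \<Sum>x\<in>B. if \<exists>k. x = flip k y then 1 else 0)" by (simp only: sym)
    also have "\<dots> = (\<Sum>y\<in>A. card (Nb B y))" using finB cnt by simp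
    finally show ?thesis .
  qed
  have mono: "card (Nb V x) \<le> card (Nb W x)" if "V \<subseteq> W" for V x
    using that finW by (intro card_mono) (auto simp: Nb_def)
  have "Dsum W = (\<Sum>x\<in>A. card (Nb W x)) + (\<Sum>x\<in>B. card (Nb W x))"
    unfolding Dsum_def W_def using disj finA finB by (simp add: sum.union_disjoint)
  moreover have "(\<Sum>x\<in>A. card (Nb B x)) \<le> (\<Sum>x\<in>A. card (Nb W x))"
    by (intro sum_mono mono) (auto simp: W_def)
  moreover have "(\<Sum>x\<in>B. card (Nb A x)) \<le> (\<Sum>x\<in>B. card (Nb W x))"
    by (intro sum_mono mono) (auto simp: W_def)
  ultimately have D1: "2 * (\<Sum>x\<in>A. card (Nb B x)) \<le> Dsum W" using swap by linarith
  have "(\<Sum>x\<in>A. real n + 1 - 2 * real d) \<le> (\<Sum>x\<in>A. real (card (Nb B x)))"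
    by (intro sum_mono nbA)
  hence D2: "real (card A) * (real n + 1 - 2 * real d) \<le> real (\<Sum>x\<in>A. card (Nb B x))"
    by simp
  have iso': "real (Dsum W) \<le> real (card W) * log 2 (real (card W))"
  proof (rule iso[where n=n and c="\<lambda>_. False"])
    show "finite W" by (rule finW)
    show "W \<subseteq> {x. \<forall>i\<ge>n. x i = False}"
      using S(1) by (auto simp: W_def A_def B_def cube_vertices_def)
  qed
  have "log 2 (real (card W)) = 1 + log 2 (real (card A))"
    using a1 by (simp add: cW log_mult)
  moreover have "real (2 * (\<Sum>x\<in>A. card (Nb B x))) \<le> real (Dsum W)"
    using D1 by (simp only: of_nat_le_iff)
  ultimately have "2 * (real (card A) * (real n + 1 - 2 * real d)) \<le> 2 * real (card A) * (1 + log 2 (real (card A)))"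
    using D2 iso' cW by simp
  hence "real (card A) * (real n + 1 - 2 * real d) \<le> real (card A) * (1 + log 2 (real (card A)))"
    by simp
  hence "real n + 1 - 2 * real d \<le> 1 + log 2 (real (card A))"
    using a1 by (simp add: mult_le_cancel_left_pos)
  thus ?thesis by (simp add: A_def)
qed

lemma final_arith:
  fixes L D :: real
  assumes L: "1 \<le> L" and D: "1 \<le> D" and h: "L \<le> log 2 D + 2 * D - 2"
  shows "L / 2 - log 2 L / 2 + 1 / 2 < D"
proof (cases "D \<le> L")
  case True
  hence "log 2 D \<le> log 2 L" using D by simp
  thus ?thesis using h by linarith
next
  case False
  have "0 \<le> log 2 L" using L by simp
  thus ?thesis using False D by linarith
qed

theorem lemma3p5:
  fixes n :: nat and S :: "(nat \<Rightarrow> bool) set"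
  assumes "n \<ge> 2"
    and "S \<subseteq> cube_vertices n"
    and "card S = 2 ^ (n - 1)"
    and "\<forall>i < n. \<exists>x\<in>S. \<exists>y\<in>S. cube_edge_dir n x y i"
  shows "real (induced_max_degree n S) >
           log 2 n / 2 - log 2 (log 2 n) / 2 + 1 / 2"
proof -
  note n2 = assms(1) and Ssub = assms(2) and cS = assms(3) and dirs = assms(4)
  define d where "d = induced_max_degree n S"
  define A where "A = (\<lambda>i. {x\<in>S. \<not> x i \<and> flip i x \<in> S})"
  have finS: "finite S" using finite_cube Ssub finite_subset by blast
  have degb: "\<forall>x\<in>S. induced_degree n S x \<le> d"
    using finS by (auto simp: d_def induced_max_degree_def)
  have Ane: "A i \<noteq> {}" if i: "i < n" for i
  proof -
    obtain x y where xy: "x \<in> S" "y \<in> S" "cube_edge_dir n x y i" using dirs i by blast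
    hence y: "y = flip i x" by (simp add: edge_dir_iff)
    show ?thesis
    proof (cases "x i")
      case False thus ?thesis using xy y by (auto simp: A_def)
    next
      case True
      hence "y \<in> A i" using xy y by (auto simp: A_def)
      thus ?thesis by auto
    qed
  qed
  have bnd: "real n - 2 * real d \<le> log 2 (card (A i))" if "i < n" for i
    unfolding A_def by (rule dir_bound[OF Ssub cS that degb]) (use Ane[OF that] in \<open>simp add: A_def\<close>)
  have finA: "finite (A i)" for i using finS by (simp add: A_def)
  have Apos: "0 < card (A i)" if "i < n" for i using Ane[OF that] finA card_gt_0_iff by blast
  have Alow: "2 powr (real n - 2 * real d) \<le> real (card (A i))" if "i < n" for i
  proof -
    have "2 powr (real n - 2 * real d) \<le> 2 powr (log 2 (card (A i)))"
      using bnd[OF that] by simp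
    also have "\<dots> = real (card (A i))" using Apos[OF that] by simp
    finally show ?thesis .
  qed
  have d1: "1 \<le> d"
  proof -
    have "0 < n" using n2 by simp
    then obtain x where x: "x \<in> A 0" using Ane by blast
    have xc: "x \<in> cube_vertices n" using x Ssub by (auto simp: A_def)
    have "0 \<in> {j. j < n \<and> flip j x \<in> S}" using x \<open>0 < n\<close> by (auto simp: A_def)
    moreover have "finite {j. j < n \<and> flip j x \<in> S}"
      by (rule finite_subset[of _ "{..<n}"]) auto
    ultimately have "0 < card {j. j < n \<and> flip j x \<in> S}"
      by (auto simp: card_gt_0_iff)
    moreover have "x \<in> S" using x by (simp add: A_def)
    hence "induced_degree n S x \<le> d" using degb by blast
    ultimately show ?thesis using deg_eq[OF Ssub xc] by simp
  qed
  have twoA: "card {x\<in>S. flip j x \<in> S} = 2 * card (A j)" for j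
  proof -
    have u: "{x\<in>S. flip j x \<in> S} = A j \<union> {x\<in>S. x j \<and> flip j x \<in> S}" "A j \<inter> {x\<in>S. x j \<and> flip j x \<in> S} = {}"
      by (auto simp: A_def)
    have "flip j ` A j = {x\<in>S. x j \<and> flip j x \<in> S}"
    proof
      show "flip j ` A j \<subseteq> {x\<in>S. x j \<and> flip j x \<in> S}" by (auto simp: A_def)
      show "{x\<in>S. x j \<and> flip j x \<in> S} \<subseteq> flip j ` A j"
      proof
        fix x assume "x \<in> {x\<in>S. x j \<and> flip j x \<in> S}"
        hence "flip j x \<in> A j" by (auto simp: A_def)
        thus "x \<in> flip j ` A j" by (metis flip_flip image_eqI)
      qed
    qed
    moreover have "card (flip j ` A j) = card (A j)"
      by (intro card_image) (metis flip_flip inj_onI)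
    ultimately have "card {x\<in>S. x j \<and> flip j x \<in> S} = card (A j)" by simp
    thus ?thesis using u finA finS by (simp add: card_Un_disjoint)
  qed
  have "(\<Sum>x\<in>S. induced_degree n S x) = (\<Sum>x\<in>S. card {j. j < n \<and> flip j x \<in> S})"
    using deg_eq[OF Ssub] Ssub by (intro sum.cong) auto
  also have "\<dots> = (\<Sum>x\<in>S. \<Sum>j<n. if flip j x \<in> S then 1 else 0)"
    by (intro sum.cong refl) (simp add: sum.If_cases lessThan_def Int_def)
  also have "\<dots> = (\<Sum>j<n. \<Sum>x\<in>S. if flip j x \<in> S then 1 else 0)" by (rule sum.swap)
  also have "\<dots> = (\<Sum>j<n. card {x\<in>S. flip j x \<in> S})"
    using finS by (intro sum.cong refl) (simp add: sum.If_cases Int_def)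
  also have "\<dots> = (\<Sum>j<n. 2 * card (A j))" by (simp add: twoA)
  finally have sumeq: "(\<Sum>x\<in>S. induced_degree n S x) = 2 * (\<Sum>j<n. card (A j))"
    by (simp add: sum_distrib_left)
  have "(\<Sum>x\<in>S. induced_degree n S x) \<le> (\<Sum>x\<in>S. d)" using degb by (intro sum_mono) auto
  hence sumle: "2 * (\<Sum>j<n. card (A j)) \<le> d * 2 ^ (n - 1)" using sumeq cS by (simp add: mult.commute)
  have "(\<Sum>j<n. 2 powr (real n - 2 * real d)) \<le> (\<Sum>j<n. real (card (A j)))"
    by (intro sum_mono Alow) simp
  hence "real n * 2 powr (real n - 2 * real d) \<le> real (\<Sum>j<n. card (A j))" by simp
  have key: "2 * real n * 2 powr (real n - 2 * real d) \<le> real d * 2 ^ (n - 1)"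
  proof -
    have "real (2 * (\<Sum>j<n. card (A j))) \<le> real (d * 2 ^ (n - 1))"
      using sumle by (simp only: of_nat_le_iff)
    hence "2 * real (\<Sum>j<n. card (A j)) \<le> real d * 2 ^ (n - 1)" by simp
    thus ?thesis using \<open>real n * 2 powr (real n - 2 * real d) \<le> real (\<Sum>j<n. card (A j))\<close> by linarith
  qed
  have npos: "0 < real n" using n2 by simp
  have dpos: "0 < real d" using d1 by simp
  have "log 2 (2 * real n * 2 powr (real n - 2 * real d)) \<le> log 2 (real d * 2 ^ (n - 1))"
    using key npos dpos by (subst log_le_cancel_iff) auto
  moreover have "log 2 (2 * real n * 2 powr (real n - 2 * real d)) = 1 + log 2 n + (real n - 2 * real d)"
    using npos by (simp add: log_mult)
  moreover have "log 2 (real d * 2 ^ (n - 1)) = log 2 d + (real n - 1)"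
    using dpos n2 by (simp add: log_mult log_nat_power of_nat_diff)
  ultimately have h: "log 2 n \<le> log 2 d + 2 * real d - 2" by linarith
  have L1: "1 \<le> log 2 (real n)" using n2 by simp
  show ?thesis using final_arith[OF L1 _ h] d1 by (simp add: d_def)
qed

end
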